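(* There exists $c_\Sigma\in\mathcal C_\Sigma^\vee$ such that, for every $z\in U_\Sigma=\{z\in\mathbb C^n:(-\log|z_1|,\dots,-\log|z_n|)\in\mathcal C_\Sigma^\vee+c_\Sigma,\ \arg z_j\in(-\pi,\pi)\}$, the series $\Phi_\Sigma(z)=\sum_{v\in\mathrm{Box}(\Sigma)}x^v\sum_{l\in\mathbb L}\prod_{j=1}^n\frac{z_j^{l_j+\gamma^v_j+D_j}}{\Gamma(l_j+\gamma^v_j+D_j+1)}$ defines an element of the completion of the graded ring $\mathbb C[K,\Sigma]$; that is, $\Phi_\Sigma$ is a map from $U_\Sigma$ to the completion of $\mathbb C[K,\Sigma]$.
   Context: $N\cong\mathbb Z^d$ lattice, $\mathcal A=\{v_1,\dots,v_n\}\subset N$ generating $N$ with a homomorphism $\mathrm h:N\to\mathbb Z$, $\mathrm h(v_j)=1$; $\mathbb L=\{l\in\mathbb Z^n:\sum l_jv_j=0\}$; $K=\mathbb R_{\ge0}\mathrm{Conv}(\mathcal A)$; $\Sigma$ the simplicial fan supported on $K$ from a regular triangulation of $\mathrm{Conv}(\mathcal A)$ with vertices in $\mathcal A$; $\Sigma(d)$ maximal cones; fix $\beta\in N$. $\mathbb C[K,\Sigma]$: basis $x^w$ ($w\in K\cap N$), $x^{w_1}x^{w_2}=x^{w_1+w_2}$ if some cone of $\Sigma$ contains both, else $0$; graded by $\mathrm h$; its completion is the product of its graded pieces. $\mathrm{Box}(\Sigma)$: $v=\sum q^v_jv_j\in N$, $0\le q^v_j<1$, $q^v_j=0$ unless $v_j$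 spans a ray of a fixed maximal cone. For each $v$ a $\gamma^v\in\mathbb Q^n$ is fixed with $\sum\gamma^v_jv_j=\beta$, $\gamma^v_j-q^v_j\in\mathbb Z$. $D_j=x^{v_j}$ if $\mathbb R_{\ge0}v_j\in\Sigma$, else $0$; each factor is expanded as a power series in $D_j$ by Taylor expansion of $s\mapsto z_j^s/\Gamma(s+1)$ at $s=l_j+\gamma^v_j$, with $z_j^s=e^{s(\log|z_j|+i\arg z_j)}$. $\mathcal C_\sigma=\{x\in\mathbb L\otimes\mathbb R:x_j\ge0$ if $\mathbb R_{\ge0}v_j$ is not a ray of $\sigma\}$, $\mathcal C_\Sigma=\sum_{\sigma\in\Sigma(d)}\mathcal C_\sigma$, $\mathcal C_\Sigma^\vee$ the dual cone in $\mathbb R^n$ under the standard pairing. *)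

theory Defs
  imports "HOL-Analysis.Analysis"
begin

text \<open>Setting: N = int^'d, the generators v_j (j in the finite index type 'n) of A,
  the grading h given by a vector hh, the regular triangulation given by a height function w.\<close>

definition ivec :: "int^'d \<Rightarrow> real^'d" where
  "ivec x = (\<chi> i. real_of_int (x $ i))"

definition rv :: "('n \<Rightarrow> int^'d) \<Rightarrow> 'n \<Rightarrow> real^'d" where
  "rv v j = ivec (v j)"

definition hval :: "int^'d \<Rightarrow> int^'d \<Rightarrow> int" where
  "hval hh x = (\<Sum>i\<in>UNIV. hh $ i * x $ i)"

definition generates :: "('n::finite \<Rightarrow> int^'d::finite) \<Rightarrow> bool" where
  "generates v \<longleftrightarrow> (\<forall>x::int^'d. \<exists>c::'n \<Rightarrow> int. x = (\<chi> i. \<Sum>j\<in>UNIV. c j * v j $ i))"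

text \<open>Maximal cells of the regular subdivision of Conv(A) induced by the heights w
  (index sets of the points on a full-dimensional lower face of the lifted point configuration).\<close>
definition cells :: "('n::finite \<Rightarrow> int^'d::finite) \<Rightarrow> ('n \<Rightarrow> real) \<Rightarrow> 'n set set" where
  "cells v w = {C. \<exists>\<psi>::real^'d. (\<forall>j. \<psi> \<bullet> rv v j \<le> w j) \<and> C = {j. \<psi> \<bullet> rv v j = w j}
                     \<and> span (rv v ` C) = UNIV}"

definition regular_triangulation :: "('n::finite \<Rightarrow> int^'d::finite) \<Rightarrow> ('n \<Rightarrow> real) \<Rightarrow> bool" where
  "regular_triangulation v w \<longleftrightarrow> (\<forall>C\<in>cells v w. inj_on (rv v) C \<and> independent (rv v ` C))"

definition poscomb :: "('n::finite \<Rightarrow> int^'d::finite) \<Rightarrow> 'n set \<Rightarrow> real^'d \<Rightarrow> bool" where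
  "poscomb v C y \<longleftrightarrow> (\<exists>a. (\<forall>j\<in>C. 0 \<le> a j) \<and> y = (\<Sum>j\<in>C. a j *\<^sub>R rv v j))"

definition isray :: "('n::finite \<Rightarrow> int^'d::finite) \<Rightarrow> ('n \<Rightarrow> real) \<Rightarrow> 'n \<Rightarrow> bool" where
  "isray v w j \<longleftrightarrow> (\<exists>C\<in>cells v w. j \<in> C)"

definition box_wit :: "('n::finite \<Rightarrow> int^'d::finite) \<Rightarrow> ('n \<Rightarrow> real) \<Rightarrow> 'n set \<Rightarrow> ('n \<Rightarrow> real) \<Rightarrow> int^'d \<Rightarrow> bool" where
  "box_wit v w C q b \<longleftrightarrow> C \<in> cells v w \<and> (\<forall>j. 0 \<le> q j \<and> q j < 1) \<and> (\<forall>j. j \<notin> C \<longrightarrow> q j = 0)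
      \<and> ivec b = (\<Sum>j\<in>UNIV. q j *\<^sub>R rv v j)"

definition Box :: "('n::finite \<Rightarrow> int^'d::finite) \<Rightarrow> ('n \<Rightarrow> real) \<Rightarrow> (int^'d) set" where
  "Box v w = {b. \<exists>C q. box_wit v w C q b}"

definition Lat :: "('n::finite \<Rightarrow> int^'d::finite) \<Rightarrow> ('n \<Rightarrow> int) set" where
  "Lat v = {l. (\<chi> i. \<Sum>j\<in>UNIV. l j * v j $ i) = 0}"

definition LR :: "('n::finite \<Rightarrow> int^'d::finite) \<Rightarrow> (real^'n) set" where
  "LR v = {x. (\<Sum>j\<in>UNIV. x $ j *\<^sub>R rv v j) = 0}"

definition Ccone :: "('n::finite \<Rightarrow> int^'d::finite) \<Rightarrow> 'n set \<Rightarrow> (real^'n) set" where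
  "Ccone v C = {x \<in> LR v. \<forall>j. j \<notin> C \<longrightarrow> 0 \<le> x $ j}"

definition CSigma :: "('n::finite \<Rightarrow> int^'d::finite) \<Rightarrow> ('n \<Rightarrow> real) \<Rightarrow> (real^'n) set" where
  "CSigma v w = {x. \<exists>f. (\<forall>C\<in>cells v w. f C \<in> Ccone v C) \<and> x = (\<Sum>C\<in>cells v w. f C)}"

definition dualcone :: "('n::finite \<Rightarrow> int^'d::finite) \<Rightarrow> ('n \<Rightarrow> real) \<Rightarrow> (real^'n) set" where
  "dualcone v w = {y. \<forall>x\<in>CSigma v w. 0 \<le> x \<bullet> y}"

definition Udom :: "('n::finite \<Rightarrow> int^'d::finite) \<Rightarrow> ('n \<Rightarrow> real) \<Rightarrow> real^'n \<Rightarrow> ('n \<Rightarrow> complex) set" where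
  "Udom v w c = {z. (\<forall>j. z j \<noteq> 0 \<and> - pi < Arg (z j) \<and> Arg (z j) < pi)
                   \<and> (\<exists>y\<in>dualcone v w. \<forall>j. - ln (cmod (z j)) = y $ j + c $ j)}"

definition zpow :: "complex \<Rightarrow> complex \<Rightarrow> complex" where
  "zpow z s = exp (s * (complex_of_real (ln (cmod z)) + \<i> * complex_of_real (Arg z)))"

definition taylor_coeff :: "complex \<Rightarrow> real \<Rightarrow> nat \<Rightarrow> complex" where
  "taylor_coeff z s0 m = (deriv ^^ m) (\<lambda>s. zpow z s * rGamma (s + 1)) (complex_of_real s0) / of_nat (fact m)"

text \<open>x^b * prod_j D_j^(m_j) is nonzero in C[K,Sigma] (then equal to x^(b + sum m_j v_j)).\<close>
definition mono_nonzero :: "('n::finite \<Rightarrow> int^'d::finite) \<Rightarrow> ('n \<Rightarrow> real) \<Rightarrow> int^'d \<Rightarrow> ('n \<Rightarrow> nat) \<Rightarrow> bool" where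
  "mono_nonzero v w b m \<longleftrightarrow> (\<forall>j. 0 < m j \<longrightarrow> isray v w j)
     \<and> (\<exists>C\<in>cells v w. poscomb v C (ivec b) \<and> (\<forall>j. 0 < m j \<longrightarrow> poscomb v C (rv v j)))"

text \<open>Coefficient of x^u in the l-th term  x^b prod_j z_j^(l_j+gamma_j+D_j)/Gamma(l_j+gamma_j+D_j+1).\<close>
definition coef :: "('n::finite \<Rightarrow> int^'d::finite) \<Rightarrow> ('n \<Rightarrow> real) \<Rightarrow> (int^'d \<Rightarrow> 'n \<Rightarrow> real)
                    \<Rightarrow> ('n \<Rightarrow> complex) \<Rightarrow> int^'d \<Rightarrow> ('n \<Rightarrow> int) \<Rightarrow> int^'d \<Rightarrow> complex" where
  "coef v w \<gamma> z b l u =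
     (\<Sum>m\<in>{m. mono_nonzero v w b m \<and> ivec u = ivec b + (\<Sum>j\<in>UNIV. real (m j) *\<^sub>R rv v j)}.
        \<Prod>j\<in>UNIV. taylor_coeff (z j) (real_of_int (l j) + \<gamma> b j) (m j))"

end

theory Submission
  imports Defs "HOL-Complex_Analysis.Complex_Analysis"
begin

lemma fact_add_le: "(fact (a+b) :: real) \<le> 2^(a+b) * fact a * fact b"
proof -
  have "fact a * fact b * ((a+b) choose a) = (fact (a+b) :: nat)"
    using binomial_fact_lemma[of a "a+b"] by simp
  moreover have "((a+b) choose a) \<le> 2^(a+b)" by (rule binomial_le_pow2)
  ultimately have "fact (a+b) \<le> (fact a * fact b * 2^(a+b) :: nat)"
    by (metis mult_le_mono2)
  then have "real (fact (a+b)) \<le> real (fact a * fact b * 2^(a+b))" by linarith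
  then show ?thesis by (simp add: algebra_simps)
qed

lemma fact_mult_le': "(fact a * fact b :: real) \<le> fact (a+b)"
proof -
  have "fact a * fact b * ((a+b) choose a) = (fact (a+b) :: nat)"
    using binomial_fact_lemma[of a "a+b"] by simp
  moreover have "((a+b) choose a) \<ge> 1" by (simp add: Suc_leI)
  ultimately have "fact a * fact b \<le> (fact (a+b) :: nat)"
    by (metis mult.right_neutral mult_le_mono2)
  then have "real (fact a * fact b) \<le> real (fact (a+b))" by linarith
  then show ?thesis by simp
qed

lemma fact_sum_le:
  assumes "finite I"
  shows "(fact (\<Sum>i\<in>I. p i) :: real) \<le> 2^(card I * (\<Sum>i\<in>I. p i)) * (\<Prod>i\<in>I. fact (p i))"
  using assms
proof (induction I rule: finite_induct)
  case empty then show ?case by simp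
next
  case (insert x F)
  let ?s = "\<Sum>i\<in>F. p i"
  have "(fact (\<Sum>i\<in>insert x F. p i) :: real) = fact (p x + ?s)" using insert by simp
  also have "\<dots> \<le> 2^(p x + ?s) * fact (p x) * fact ?s" by (rule fact_add_le)
  also have "\<dots> \<le> 2^(p x + ?s) * fact (p x) * (2^(card F * ?s) * (\<Prod>i\<in>F. fact (p i)))"
    by (intro mult_left_mono insert.IH) auto
  also have "\<dots> = 2^(p x + ?s + card F * ?s) * (fact (p x) * (\<Prod>i\<in>F. fact (p i)))"
    by (simp add: power_add algebra_simps)
  also have "\<dots> \<le> 2^(card (insert x F) * (\<Sum>i\<in>insert x F. p i)) * (fact (p x) * (\<Prod>i\<in>F. fact (p i)))"
  proof (rule mult_right_mono)
    have "p x + ?s + card F * ?s \<le> Suc (card F) * (p x + ?s)" by (simp add: algebra_simps)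
    then show "(2::real)^(p x + ?s + card F * ?s) \<le> 2^(card (insert x F) * (\<Sum>i\<in>insert x F. p i))"
      using insert by (intro power_increasing) auto
  qed (auto intro!: mult_nonneg_nonneg prod_nonneg)
  also have "\<dots> = 2^(card (insert x F) * (\<Sum>i\<in>insert x F. p i)) * (\<Prod>i\<in>insert x F. fact (p i))"
    using insert by simp
  finally show ?case .
qed

lemma prod_fact_le:
  assumes "finite I"
  shows "(\<Prod>i\<in>I. fact (q i)) \<le> (fact (\<Sum>i\<in>I. q i) :: real)"
  using assms
proof (induction I rule: finite_induct)
  case empty then show ?case by simp
next
  case (insert x F)
  have "(\<Prod>i\<in>insert x F. fact (q i)) = (fact (q x) :: real) * (\<Prod>i\<in>F. fact (q i))" using insert by simp
  also have "\<dots> \<le> fact (q x) * fact (\<Sum>i\<in>F. q i)"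
    by (intro mult_left_mono insert.IH) auto
  also have "\<dots> \<le> fact (q x + (\<Sum>i\<in>F. q i))" by (rule fact_mult_le')
  finally show ?case using insert by simp
qed

definition rho :: "int \<Rightarrow> real" where
  "rho l = (if 0 \<le> l then 1 / fact (nat l) else fact (nat (-l)))"

lemma rho_alt: "rho l = fact (nat (-l)) / fact (nat l)"
  by (simp add: rho_def)

lemma rho_nonneg: "0 \<le> rho l" by (simp add: rho_def)

lemma rho_prod:
  assumes "finite I" "(\<Sum>i\<in>I. l i) = (0::int)"
  shows "(\<Prod>i\<in>I. rho (l i)) \<le> 2^(card I * (\<Sum>i\<in>I. nat \<bar>l i\<bar>))"
proof -
  define p where "p i = nat (l i)" for i
  define q where "q i = nat (- l i)" for i
  have lpq: "l i = int (p i) - int (q i)" for i by (simp add: p_def q_def)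
  have "(\<Sum>i\<in>I. int (p i)) - (\<Sum>i\<in>I. int (q i)) = 0"
    using assms(2) by (simp add: lpq sum_subtractf)
  then have spq: "(\<Sum>i\<in>I. p i) = (\<Sum>i\<in>I. q i)"
    by (metis eq_iff_diff_eq_0 of_nat_eq_iff of_nat_sum)
  have "(\<Prod>i\<in>I. rho (l i)) = (\<Prod>i\<in>I. fact (q i)) / (\<Prod>i\<in>I. fact (p i))"
    by (simp add: rho_alt p_def q_def prod_dividef)
  also have "\<dots> \<le> fact (\<Sum>i\<in>I. q i) / (\<Prod>i\<in>I. fact (p i))"
    by (intro divide_right_mono prod_fact_le assms) (auto intro: prod_nonneg)
  also have "\<dots> = fact (\<Sum>i\<in>I. p i) / (\<Prod>i\<in>I. fact (p i))" by (simp add: spq)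
  also have "\<dots> \<le> 2^(card I * (\<Sum>i\<in>I. p i))"
    using fact_sum_le[OF assms(1), of p] by (simp add: divide_le_eq prod_pos)
  also have "\<dots> \<le> 2^(card I * (\<Sum>i\<in>I. nat \<bar>l i\<bar>))"
    by (intro power_increasing mult_le_mono2 sum_mono) (auto simp: p_def)
  finally show ?thesis .
qed

lemma rGamma_pos_bound:
  fixes g :: real and J :: nat
  assumes J: "real J \<ge> 2 * \<bar>g\<bar> + 2"
    and M: "\<And>s. cmod s \<le> \<bar>g\<bar> + real J + 2 \<Longrightarrow> cmod (rGamma (s+1)) \<le> M"
  shows "cmod (s - of_real (real k + g)) \<le> 1 \<Longrightarrow> cmod (rGamma (s+1)) \<le> M * fact J * 2^k / fact k"
proof (induction k arbitrary: s)
  case 0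
  have "cmod s \<le> cmod (s - of_real g) + cmod (of_real g)" by (metis add.commute diff_add_cancel norm_triangle_ineq)
  then have "cmod s \<le> \<bar>g\<bar> + 1" using 0 by simp
  then have b: "cmod (rGamma (s+1)) \<le> M" using M J by simp
  have "cmod (rGamma (0+1)) \<le> M" by (rule M) simp
  then have M0: "M \<ge> 0" by (meson norm_ge_zero order_trans)
  have "(1::real) \<le> fact J" by simp
  then have "M * 1 \<le> M * fact J" using M0 by (intro mult_left_mono) auto
  then show ?case using b by simp
next
  case (Suc k)
  have "cmod (rGamma (0+1)) \<le> M" by (rule M) simp
  then have M0: "M \<ge> 0" by (meson norm_ge_zero order_trans)
  show ?case
  proof (cases "Suc k \<le> J")
    case True
    have "cmod s \<le> cmod (s - of_real (real (Suc k) + g)) + cmod (of_real (real (Suc k) + g) :: complex)"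
      by (metis add.commute diff_add_cancel norm_triangle_ineq)
    also have "\<dots> \<le> 1 + (real (Suc k) + \<bar>g\<bar>)"
    proof (rule add_mono)
      show "cmod (of_real (real (Suc k) + g) :: complex) \<le> real (Suc k) + \<bar>g\<bar>"
        by (simp only: norm_of_real; linarith)
    qed (rule Suc.prems)
    finally have "cmod s \<le> \<bar>g\<bar> + real J + 2" using True by linarith
    then have b: "cmod (rGamma (s+1)) \<le> M" using M by blast
    have "fact (Suc k) \<le> (fact J :: real)" using True by (intro fact_mono) auto
    then have "1 \<le> fact J / (fact (Suc k) :: real)" by simp
    moreover have "(1::real) \<le> 2^Suc k" by (rule one_le_power) simp
    ultimately have "1 \<le> fact J * 2^Suc k / (fact (Suc k) :: real)"
      by (smt (verit, ccfv_SIG) divide_le_eq_1 fact_gt_zero mult_le_cancel_left1 times_divide_eq_left)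
    then have "M * 1 \<le> M * (fact J * 2^Suc k / fact (Suc k))" using M0 by (intro mult_left_mono) auto
    then show ?thesis using b by simp
  next
    case False
    then have kJ: "real k \<ge> real J" by simp
    have "cmod ((s - 1) - of_real (real k + g)) \<le> 1" using Suc.prems
      by (simp add: algebra_simps)
    then have IH: "cmod (rGamma s) \<le> M * fact J * 2^k / fact k" using Suc.IH[of "s-1"] by simp
    have "Re s \<ge> real (Suc k) + g - 1"
      using Suc.prems complex_Re_le_cmod[of "s - of_real (real (Suc k) + g)"]
      by (smt (verit) minus_complex.simps(1) Re_complex_of_real abs_Re_le_cmod)
    then have Res: "Re s \<ge> (real k + 1) / 2" using kJ J by simp
    then have sabs: "cmod s \<ge> (real k + 1) / 2" using complex_Re_le_cmod[of s] by linarith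
    then have s0: "s \<noteq> 0"
    proof -
      have "(real k + 1) / 2 > 0" by simp
      then show ?thesis using sabs by auto
    qed
    have "rGamma (s+1) = rGamma s / s" using rGamma_plus1[of s] s0 by (simp add: field_simps)
    then have "cmod (rGamma (s+1)) = cmod (rGamma s) / cmod s" by (simp add: norm_divide)
    also have "\<dots> \<le> (M * fact J * 2^k / fact k) / ((real k + 1) / 2)"
      by (intro frac_le IH sabs) (auto intro!: divide_nonneg_nonneg mult_nonneg_nonneg M0)
    also have "\<dots> = M * fact J * 2^Suc k / fact (Suc k)"
      by (simp add: field_simps)
    finally show ?thesis .
  qed
qed

lemma rGamma_neg_bound:
  fixes g :: real and J :: nat
  assumes J: "real J \<ge> 2 * \<bar>g\<bar> + 2"
    and M: "\<And>s. cmod s \<le> \<bar>g\<bar> + real J + 2 \<Longrightarrow> cmod (rGamma (s+1)) \<le> M"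
  shows "cmod (s - of_real (g - real k)) \<le> 1 \<Longrightarrow> cmod (rGamma (s+1)) \<le> M * fact J * 2^k * fact k"
proof (induction k arbitrary: s)
  case 0
  have "cmod s \<le> cmod (s - of_real g) + cmod (of_real g)" by (metis add.commute diff_add_cancel norm_triangle_ineq)
  then have "cmod s \<le> \<bar>g\<bar> + 1" using 0 by simp
  then have b: "cmod (rGamma (s+1)) \<le> M" using M J by simp
  have "cmod (rGamma (0+1)) \<le> M" by (rule M) simp
  then have M0: "M \<ge> 0" by (meson norm_ge_zero order_trans)
  have "(1::real) \<le> fact J" by simp
  then have "M * 1 \<le> M * fact J" using M0 by (intro mult_left_mono) auto
  then show ?case using b by simp
next
  case (Suc k)
  have "cmod (rGamma (0+1)) \<le> M" by (rule M) simp
  then have M0: "M \<ge> 0" by (meson norm_ge_zero order_trans)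
  show ?case
  proof (cases "Suc k \<le> J")
    case True
    have "cmod s \<le> cmod (s - of_real (g - real (Suc k))) + cmod (of_real (g - real (Suc k)) :: complex)"
      by (metis add.commute diff_add_cancel norm_triangle_ineq)
    also have "\<dots> \<le> 1 + (real (Suc k) + \<bar>g\<bar>)"
    proof (rule add_mono)
      show "cmod (of_real (g - real (Suc k)) :: complex) \<le> real (Suc k) + \<bar>g\<bar>"
        by (simp only: norm_of_real; linarith)
    qed (rule Suc.prems)
    finally have "cmod s \<le> \<bar>g\<bar> + real J + 2" using True by linarith
    then have b: "cmod (rGamma (s+1)) \<le> M" using M by blast
    have h1: "(1::real) \<le> 2^Suc k" by (rule one_le_power) simp
    have h2: "(1::real) \<le> fact (Suc k)" by (rule fact_ge_1)
    have h3: "(1::real) \<le> fact J" by (rule fact_ge_1)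
    have "(1::real) \<le> fact J * 2^Suc k * fact (Suc k)"
      by (intro mult_ge1_I h1 h2 h3)
    then have "M * 1 \<le> M * (fact J * 2^Suc k * fact (Suc k))" using M0 by (intro mult_left_mono) auto
    then show ?thesis using b by (simp add: mult.assoc)
  next
    case False
    then have kJ: "real k \<ge> real J" by simp
    have "cmod ((s + 1) - of_real (g - real k)) \<le> 1" using Suc.prems
      by (simp add: algebra_simps)
    then have IH: "cmod (rGamma (s+1+1)) \<le> M * fact J * 2^k * fact k" using Suc.IH[of "s+1"] by simp
    have "cmod (s+1) \<le> cmod ((s + 1) - of_real (g - real k)) + cmod (of_real (g - real k) :: complex)"
      by (metis add.commute diff_add_cancel norm_triangle_ineq)
    also have "\<dots> \<le> 1 + (\<bar>g\<bar> + real k)"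
    proof (rule add_mono)
      show "cmod (of_real (g - real k) :: complex) \<le> \<bar>g\<bar> + real k"
        by (simp only: norm_of_real; linarith)
    qed (rule \<open>cmod ((s + 1) - of_real (g - real k)) \<le> 1\<close>)
    finally have s1': "cmod (s+1) \<le> 1 + (\<bar>g\<bar> + real k)" .
    have s1: "cmod (s+1) \<le> 2 * (real k + 1)" using s1' kJ J abs_ge_zero[of g] by argo
    have "rGamma (s+1) = (s+1) * rGamma (s+1+1)" using rGamma_plus1[of "s+1"] by simp
    then have "cmod (rGamma (s+1)) = cmod (s+1) * cmod (rGamma (s+1+1))" by (simp add: norm_mult)
    also have "\<dots> \<le> (2 * (real k + 1)) * (M * fact J * 2^k * fact k)"
      by (intro mult_mono s1 IH) auto
    also have "\<dots> = M * fact J * 2^Suc k * fact (Suc k)"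
      by (simp add: field_simps)
    finally show ?thesis .
  qed
qed

lemma rGamma_bound:
  fixes g :: real
  shows "\<exists>A\<ge>0. \<forall>k::nat. \<forall>s.
     (cmod (s - of_real (real k + g)) \<le> 1 \<longrightarrow> cmod (rGamma (s+1)) \<le> A * 2^k / fact k) \<and>
     (cmod (s - of_real (g - real k)) \<le> 1 \<longrightarrow> cmod (rGamma (s+1)) \<le> A * 2^k * fact k)"
proof -
  define J where "J = nat \<lceil>2 * \<bar>g\<bar> + 2\<rceil>"
  have J: "real J \<ge> 2 * \<bar>g\<bar> + 2" unfolding J_def by linarith
  define R where "R = \<bar>g\<bar> + real J + 2"
  have cc: "compact (cball (0::complex) R)" by (rule compact_cball)
  have "compact ((\<lambda>s::complex. rGamma (s+1)) ` cball 0 R)"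
    by (intro compact_continuous_image continuous_on_compose2[OF continuous_on_rGamma[of UNIV]] continuous_intros cc) auto
  then obtain M where M: "\<forall>x\<in>(\<lambda>s::complex. rGamma (s+1)) ` cball 0 R. norm x \<le> M"
    using compact_imp_bounded bounded_iff by metis
  then have M': "\<And>s. cmod s \<le> \<bar>g\<bar> + real J + 2 \<Longrightarrow> cmod (rGamma (s+1)) \<le> M"
    by (auto simp: R_def)
  have "cmod (rGamma (0+1)) \<le> M" by (rule M') simp
  then have M0: "M \<ge> 0" by (meson norm_ge_zero order_trans)
  show ?thesis
    using rGamma_pos_bound[OF J M'] rGamma_neg_bound[OF J M'] M0
    by (intro exI[of _ "M * fact J"]) auto
qed

lemma zpow_bound:
  assumes "cmod (s - of_real s0) \<le> 1"
  shows "cmod (zpow z s) \<le> exp (s0 * ln (cmod z) + \<bar>ln (cmod z)\<bar> + pi)"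
proof -
  define L where "L = ln (cmod z)"
  define th where "th = Arg z"
  have re: "\<bar>Re s - s0\<bar> \<le> 1" using abs_Re_le_cmod[of "s - of_real s0"] assms by simp
  have im: "\<bar>Im s\<bar> \<le> 1" using abs_Im_le_cmod[of "s - of_real s0"] assms by simp
  have th: "\<bar>th\<bar> \<le> pi" using Arg_bounded[of z] by (auto simp: th_def abs_le_iff)
  have "Re (s * (complex_of_real L + \<i> * complex_of_real th)) = Re s * L - Im s * th"
    by simp
  also have "\<dots> \<le> s0 * L + \<bar>L\<bar> + pi"
  proof -
    have "(Re s - s0) * L \<le> \<bar>L\<bar>"
    proof -
      have "(Re s - s0) * L \<le> \<bar>(Re s - s0) * L\<bar>" by simp
      also have "\<dots> = \<bar>Re s - s0\<bar> * \<bar>L\<bar>" by (rule abs_mult)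
      also have "\<dots> \<le> 1 * \<bar>L\<bar>" using re by (intro mult_right_mono) auto
      finally show ?thesis by simp
    qed
    moreover have "- (Im s * th) \<le> pi"
    proof -
      have "\<bar>Im s * th\<bar> \<le> 1 * pi" unfolding abs_mult by (intro mult_mono im th) auto
      then show ?thesis by linarith
    qed
    ultimately show ?thesis by (simp add: algebra_simps)
  qed
  finally show ?thesis unfolding zpow_def L_def th_def by simp
qed

lemma taylor_bound:
  assumes "\<And>s. cmod (s - of_real s0) = 1 \<Longrightarrow> cmod (rGamma (s+1)) \<le> B"
  shows "cmod (taylor_coeff z s0 m) \<le> exp (s0 * ln (cmod z) + \<bar>ln (cmod z)\<bar> + pi) * B"
proof -
  define E where "E = exp (s0 * ln (cmod z) + \<bar>ln (cmod z)\<bar> + pi)"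
  define f where "f = (\<lambda>s. zpow z s * rGamma (s + 1))"
  have hol: "f holomorphic_on A" for A
    unfolding f_def zpow_def by (intro holomorphic_intros)
  have "norm ((deriv ^^ m) f (complex_of_real s0)) \<le> fact m * (E * B) / 1^m"
  proof (rule Cauchy_inequality)
    show "f holomorphic_on ball (complex_of_real s0) 1" by (rule hol)
    show "continuous_on (cball (complex_of_real s0) 1) f"
      by (rule holomorphic_on_imp_continuous_on[OF hol])
    fix x assume x: "norm (complex_of_real s0 - x) = 1"
    then have x': "cmod (x - of_real s0) = 1" by (simp add: norm_minus_commute)
    have "norm (f x) = cmod (zpow z x) * cmod (rGamma (x+1))" by (simp add: f_def norm_mult)
    also have "\<dots> \<le> E * B"
      using zpow_bound[of x s0 z] x' assms[OF x'] unfolding E_def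
      by (intro mult_mono) auto
    finally show "norm (f x) \<le> E * B" .
  qed simp
  then show ?thesis
    unfolding taylor_coeff_def f_def[symmetric] E_def[symmetric]
    by (simp add: norm_divide divide_le_eq mult.commute)
qed

lemma tc_bound:
  fixes g :: real
  shows "\<exists>A\<ge>0. \<forall>l::int. \<forall>z m. cmod (taylor_coeff z (real_of_int l + g) m)
     \<le> exp ((real_of_int l + g) * ln (cmod z) + \<bar>ln (cmod z)\<bar> + pi) * (A * 2^(nat \<bar>l\<bar>) * rho l)"
proof -
  obtain A where A0: "A \<ge> 0" and A: "\<And>k s. (cmod (s - of_real (real k + g)) \<le> 1 \<longrightarrow> cmod (rGamma (s+1)) \<le> A * 2^k / fact k) \<and>
     (cmod (s - of_real (g - real k)) \<le> 1 \<longrightarrow> cmod (rGamma (s+1)) \<le> A * 2^k * fact k)"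
    using rGamma_bound[of g] by blast
  show ?thesis
  proof (intro exI[of _ A] conjI allI A0)
    fix l :: int and z m
    show "cmod (taylor_coeff z (real_of_int l + g) m)
     \<le> exp ((real_of_int l + g) * ln (cmod z) + \<bar>ln (cmod z)\<bar> + pi) * (A * 2^(nat \<bar>l\<bar>) * rho l)"
    proof (rule taylor_bound)
      fix s assume s: "cmod (s - of_real (real_of_int l + g)) = 1"
      show "cmod (rGamma (s+1)) \<le> A * 2^(nat \<bar>l\<bar>) * rho l"
      proof (cases "0 \<le> l")
        case True
        then have e: "complex_of_real (real_of_int l + g) = complex_of_real (real (nat l) + g)" by simp
        have "cmod (s - complex_of_real (real (nat l) + g)) \<le> 1" using s[unfolded e] by linarith
        then have "cmod (rGamma (s+1)) \<le> A * 2^(nat l) / fact (nat l)" using A[where k="nat l" and s=s] by blast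
        moreover have "nat \<bar>l\<bar> = nat l" using True by simp
        ultimately show ?thesis using True by (simp add: rho_def)
      next
        case False
        then have e: "complex_of_real (real_of_int l + g) = complex_of_real (g - real (nat (-l)))" by simp
        have "cmod (s - complex_of_real (g - real (nat (-l)))) \<le> 1" using s[unfolded e] by linarith
        then have "cmod (rGamma (s+1)) \<le> A * 2^(nat (-l)) * fact (nat (-l))" using A[where k="nat (-l)" and s=s] by blast
        moreover have "nat \<bar>l\<bar> = nat (-l)" using False by simp
        ultimately show ?thesis using False by (simp add: rho_def)
      qed
    qed
  qed
qed

lemma sum_half_int: "(\<Sum>k\<in>{-int N..int N}. (1/2::real)^(nat \<bar>k\<bar>)) = 3 - 2 * (1/2)^N"
proof (induction N)
  case 0 then show ?case by simp
next
  case (Suc N)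
  have e: "{-int (Suc N)..int (Suc N)} = insert (int N + 1) (insert (-(int N + 1)) {-int N..int N})"
    by auto
  have "(\<Sum>k\<in>{-int (Suc N)..int (Suc N)}. (1/2::real)^(nat \<bar>k\<bar>))
     = (1/2)^(nat \<bar>int N + 1\<bar>) + ((1/2)^(nat \<bar>-(int N + 1)\<bar>) + (\<Sum>k\<in>{-int N..int N}. (1/2::real)^(nat \<bar>k\<bar>)))"
    unfolding e by (subst sum.insert; simp)+
  also have "\<dots> = 2 * (1/2)^(Suc N) + (3 - 2 * (1/2)^N)"
    using Suc by (simp add: nat_add_distrib)
  also have "\<dots> = 3 - 2 * (1/2)^(Suc N)" by simp
  finally show ?case .
qed

lemma weight_summable:
  "(\<lambda>l::'n::finite \<Rightarrow> int. \<Prod>j\<in>UNIV. (1/2::real)^(nat \<bar>l j\<bar>)) summable_on UNIV"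
proof (rule nonneg_bdd_above_summable_on)
  show "bdd_above (sum (\<lambda>l::'n::finite \<Rightarrow> int. \<Prod>j\<in>UNIV. (1/2::real)^(nat \<bar>l j\<bar>)) ` {F. F \<subseteq> UNIV \<and> finite F})"
  proof (rule bdd_aboveI2)
    fix F :: "('n \<Rightarrow> int) set" assume "F \<in> {F. F \<subseteq> UNIV \<and> finite F}"
    then have fin: "finite F" by simp
    define N where "N = Max (insert 0 ((\<lambda>(l,j). nat \<bar>l j\<bar>) ` (F \<times> UNIV)))"
    have Nb: "nat \<bar>l j\<bar> \<le> N" if "l \<in> F" for l j
      unfolding N_def using fin that by (intro Max_ge) auto
    have sub: "F \<subseteq> PiE UNIV (\<lambda>_. {-int N..int N})"
    proof
      fix l assume "l \<in> F"
      then have "\<bar>l j\<bar> \<le> int N" for j using Nb[of l j] by linarith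
      then have "l j \<in> {-int N..int N}" for j using abs_le_iff[of "l j" "int N"] by (simp add: \<open>\<And>j. \<bar>l j\<bar> \<le> int N\<close>)
      then show "l \<in> PiE UNIV (\<lambda>_. {-int N..int N})" by auto
    qed
    have finP: "finite (PiE (UNIV::'n set) (\<lambda>_. {-int N..int N}))" by (intro finite_PiE) auto
    have "(\<Sum>l\<in>F. \<Prod>j\<in>UNIV. (1/2::real)^(nat \<bar>l j\<bar>))
        \<le> (\<Sum>l\<in>PiE (UNIV::'n set) (\<lambda>_. {-int N..int N}). \<Prod>j\<in>UNIV. (1/2::real)^(nat \<bar>l j\<bar>))"
      apply (rule sum_mono2[OF finP sub])
      apply (auto intro: prod_nonneg)
      done
    also have "\<dots> = (\<Prod>j\<in>(UNIV::'n set). \<Sum>k\<in>{-int N..int N}. (1/2::real)^(nat \<bar>k\<bar>))"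
      by (rule prod_sum_PiE[symmetric]) auto
    also have "\<dots> \<le> (\<Prod>j\<in>(UNIV::'n set). 3)"
      using power_le_one[of "1/2::real" N] by (intro prod_mono) (auto simp: sum_half_int)
    finally show "(\<Sum>l\<in>F. \<Prod>j\<in>UNIV. (1/2::real)^(nat \<bar>l j\<bar>)) \<le> 3 ^ CARD('n)" by simp
  qed
qed (auto intro: prod_nonneg)

lemma cells_finite: "finite (cells (v::'n::finite \<Rightarrow> int^'d::finite) w)"
  by (rule finite_subset[of _ UNIV]) auto

lemma cell_support:
  fixes v :: "'n::finite \<Rightarrow> int^'d::finite"
  assumes C: "C \<in> cells v w" and C': "C' \<in> cells v w"
    and a: "\<forall>j\<in>C. 0 \<le> a j" and q: "\<forall>j. 0 \<le> q j" and qC': "\<forall>j. j \<notin> C' \<longrightarrow> q j = 0"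
    and eq: "(\<Sum>j\<in>C. a j *\<^sub>R rv v j) = (\<Sum>j\<in>UNIV. q j *\<^sub>R rv v j)" and qj: "q j \<noteq> 0"
  shows "j \<in> C"
proof -
  obtain \<psi> where \<psi>: "\<forall>j. \<psi> \<bullet> rv v j \<le> w j" and Cdef: "C = {j. \<psi> \<bullet> rv v j = w j}"
    using C unfolding cells_def by blast
  obtain \<psi>' where \<psi>': "\<forall>j. \<psi>' \<bullet> rv v j \<le> w j" and C'def: "C' = {j. \<psi>' \<bullet> rv v j = w j}"
    using C' unfolding cells_def by blast
  have i1: "(\<Sum>j\<in>UNIV. q j * (\<psi> \<bullet> rv v j)) = (\<Sum>j\<in>C. a j * w j)"
  proof -
    have "(\<Sum>j\<in>UNIV. q j * (\<psi> \<bullet> rv v j)) = \<psi> \<bullet> (\<Sum>j\<in>UNIV. q j *\<^sub>R rv v j)"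
      by (simp add: inner_sum_right)
    also have "\<dots> = \<psi> \<bullet> (\<Sum>j\<in>C. a j *\<^sub>R rv v j)" using eq by simp
    also have "\<dots> = (\<Sum>j\<in>C. a j * (\<psi> \<bullet> rv v j))" by (simp add: inner_sum_right)
    also have "\<dots> = (\<Sum>j\<in>C. a j * w j)" using Cdef by (intro sum.cong) auto
    finally show ?thesis .
  qed
  have i2: "(\<Sum>j\<in>UNIV. q j * w j) \<le> (\<Sum>j\<in>C. a j * w j)"
  proof -
    have "(\<Sum>j\<in>UNIV. q j * w j) = (\<Sum>j\<in>UNIV. q j * (\<psi>' \<bullet> rv v j))"
    proof (rule sum.cong)
      fix j :: 'n
      show "q j * w j = q j * (\<psi>' \<bullet> rv v j)"
      proof (cases "q j = 0")
        case False then have "j \<in> C'" using qC' by blast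
        then show ?thesis using C'def by simp
      qed simp
    qed simp
    also have "\<dots> = \<psi>' \<bullet> (\<Sum>j\<in>UNIV. q j *\<^sub>R rv v j)" by (simp add: inner_sum_right)
    also have "\<dots> = \<psi>' \<bullet> (\<Sum>j\<in>C. a j *\<^sub>R rv v j)" using eq by simp
    also have "\<dots> = (\<Sum>j\<in>C. a j * (\<psi>' \<bullet> rv v j))" by (simp add: inner_sum_right)
    also have "\<dots> \<le> (\<Sum>j\<in>C. a j * w j)" using a \<psi>' by (intro sum_mono mult_left_mono) auto
    finally show ?thesis .
  qed
  have nn: "\<forall>j\<in>UNIV. 0 \<le> q j * (w j - \<psi> \<bullet> rv v j)" using q \<psi> by auto
  have "(\<Sum>j\<in>UNIV. q j * (w j - \<psi> \<bullet> rv v j)) = (\<Sum>j\<in>UNIV. q j * w j) - (\<Sum>j\<in>UNIV. q j * (\<psi> \<bullet> rv v j))"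
    by (simp add: algebra_simps sum_subtractf)
  also have "\<dots> \<le> 0" using i1 i2 by simp
  moreover have "0 \<le> (\<Sum>j\<in>UNIV. q j * (w j - \<psi> \<bullet> rv v j))"
    by (rule sum_nonneg) (use nn in auto)
  ultimately have "(\<Sum>j\<in>UNIV. q j * (w j - \<psi> \<bullet> rv v j)) = 0" by linarith
  then have "\<forall>j\<in>UNIV. q j * (w j - \<psi> \<bullet> rv v j) = 0"
    using sum_nonneg_eq_0_iff[of UNIV "\<lambda>j. q j * (w j - \<psi> \<bullet> rv v j)"] nn by auto
  then have "w j = \<psi> \<bullet> rv v j" using qj by auto
  then show ?thesis using Cdef by simp
qed

lemma sum_split_C:
  fixes g :: "'n::finite \<Rightarrow> real"
  shows "(\<Sum>j\<in>UNIV. g j) = (\<Sum>j\<in>UNIV. if j \<in> C then g j else 0) + (\<Sum>j\<in>UNIV. if j \<in> C then 0 else g j)"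
  by (subst sum.distrib[symmetric]) (rule sum.cong, auto)

lemma cell_delta:
  fixes v :: "'n::finite \<Rightarrow> int^'d::finite"
  assumes C: "C \<in> cells v w" and inj: "inj_on (rv v) C" and ind: "independent (rv v ` C)"
  shows "\<exists>\<delta>>0. \<forall>x\<in>Ccone v C. \<delta> * (\<Sum>j\<in>UNIV. \<bar>x$j\<bar>) \<le> (\<Sum>j\<in>UNIV. x$j * w j)"
proof -
  obtain \<psi> where \<psi>: "\<forall>j. \<psi> \<bullet> rv v j \<le> w j" and Cdef: "C = {j. \<psi> \<bullet> rv v j = w j}"
    using C unfolding cells_def by blast
  define e where "e j = w j - \<psi> \<bullet> rv v j" for j
  have epos: "j \<notin> C \<Longrightarrow> e j > 0" for j using \<psi> Cdef unfolding e_def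
    by (metis (mono_tags, lifting) diff_gt_0_iff_gt mem_Collect_eq order_less_le)
  have eC: "j \<in> C \<Longrightarrow> e j = 0" for j using Cdef unfolding e_def by simp
  define \<delta>0 where "\<delta>0 = Min (insert 1 (e ` (- C)))"
  have \<delta>0pos: "\<delta>0 > 0" unfolding \<delta>0_def using epos by (subst Min_gr_iff) auto
  have \<delta>0le: "j \<notin> C \<Longrightarrow> \<delta>0 \<le> e j" for j unfolding \<delta>0_def by (intro Min_le) auto
  define S where "S = {a::real^'n. \<forall>j. j \<notin> C \<longrightarrow> a$j = 0}"
  define f where "f a = (\<Sum>j\<in>UNIV. a$j *\<^sub>R rv v j)" for a :: "real^'n"
  have subS: "subspace S" unfolding subspace_def S_def by auto
  have lin: "linear f"
    by (rule linearI) (simp_all add: f_def scaleR_add_left sum.distrib scaleR_sum_right)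
  have fC: "f a = (\<Sum>j\<in>C. a$j *\<^sub>R rv v j)" if "a \<in> S" for a
    unfolding f_def using that by (intro sum.mono_neutral_right) (auto simp: S_def)
  have inj0: "\<forall>a\<in>S. f a = 0 \<longrightarrow> a = 0"
  proof (intro ballI impI)
    fix a assume aS: "a \<in> S" and fa: "f a = 0"
    define c where "c u = a $ (inv_into C (rv v) u)" for u
    have "(\<Sum>u\<in>rv v ` C. c u *\<^sub>R u) = (\<Sum>j\<in>C. c (rv v j) *\<^sub>R rv v j)"
      by (rule sum.reindex[OF inj, unfolded comp_def])
    also have "\<dots> = (\<Sum>j\<in>C. a$j *\<^sub>R rv v j)"
      unfolding c_def using inj by (intro sum.cong) auto
    also have "\<dots> = 0" using fC[OF aS] fa by simp
    finally have "\<forall>u\<in>rv v ` C. c u = 0" using ind unfolding independent_explicit by blast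
    then have "\<forall>j\<in>C. a$j = 0" unfolding c_def using inj by auto
    then show "a = 0" using aS unfolding S_def by (auto simp: vec_eq_iff)
  qed
  obtain \<epsilon> where \<epsilon>: "\<epsilon> > 0" and iso: "\<forall>a\<in>S. norm (f a) \<ge> \<epsilon> * norm a"
    using injective_imp_isometric[OF closed_subspace[OF subS] subS lin[unfolded linear_conv_bounded_linear] inj0]
    by blast
  define V where "V = (\<Sum>i\<in>UNIV. norm (rv v i))"
  have V0: "V \<ge> 0" unfolding V_def by (intro sum_nonneg) auto
  have Vb: "norm (rv v i) \<le> V" for i unfolding V_def by (rule member_le_sum) auto
  define K where "K = 1 + real CARD('n) * V / \<epsilon>"
  have K1: "K \<ge> 1" unfolding K_def using V0 \<epsilon> by simp
  show ?thesis
  proof (intro exI[of _ "\<delta>0 / K"] conjI ballI)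
    show "\<delta>0 / K > 0" using \<delta>0pos K1 by simp
    fix x assume x: "x \<in> Ccone v C"
    then have xLR: "(\<Sum>j\<in>UNIV. x $ j *\<^sub>R rv v j) = 0" and xpos: "\<forall>j. j \<notin> C \<longrightarrow> 0 \<le> x $ j"
      unfolding Ccone_def LR_def by auto
    define P where "P = (\<Sum>j\<in>UNIV. if j \<in> C then 0 else x$j)"
    define a where "a = (\<chi> j. if j \<in> C then x$j else 0)"
    have aS: "a \<in> S" unfolding S_def a_def by simp
    have "f a + (\<Sum>j\<in>UNIV. (if j \<in> C then 0 else x$j) *\<^sub>R rv v j) = (\<Sum>j\<in>UNIV. x $ j *\<^sub>R rv v j)"
      unfolding f_def a_def by (subst sum.distrib[symmetric]) (rule sum.cong, auto)
    then have fa: "f a = - (\<Sum>j\<in>UNIV. (if j \<in> C then 0 else x$j) *\<^sub>R rv v j)"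
      using xLR by (simp add: eq_neg_iff_add_eq_0)
    have "norm (f a) \<le> (\<Sum>j\<in>UNIV. norm ((if j \<in> C then 0 else x$j) *\<^sub>R rv v j))"
      unfolding fa norm_minus_cancel by (rule norm_sum)
    also have "\<dots> \<le> (\<Sum>j\<in>UNIV. (if j \<in> C then 0 else x$j) * V)"
      using xpos Vb by (intro sum_mono) (auto intro: mult_left_mono)
    also have "\<dots> = P * V" unfolding P_def by (simp add: sum_distrib_right)
    finally have nfa: "norm (f a) \<le> P * V" .
    have "(\<Sum>j\<in>UNIV. if j \<in> C then \<bar>x$j\<bar> else 0) \<le> (\<Sum>j\<in>(UNIV::'n set). norm a)"
    proof (intro sum_mono)
      fix j
      show "(if j \<in> C then \<bar>x$j\<bar> else 0) \<le> norm a"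
        using component_le_norm_cart[of a j] by (auto simp: a_def)
    qed
    also have "\<dots> = real CARD('n) * norm a" by simp
    also have "\<dots> \<le> real CARD('n) * (P * V / \<epsilon>)"
      using iso aS nfa \<epsilon> by (intro mult_left_mono) (auto simp: pos_le_divide_eq mult.commute intro: order_trans)
    finally have b1: "(\<Sum>j\<in>UNIV. if j \<in> C then \<bar>x$j\<bar> else 0) \<le> real CARD('n) * (P * V / \<epsilon>)" .
    have "(\<Sum>j\<in>UNIV. \<bar>x$j\<bar>) = (\<Sum>j\<in>UNIV. if j \<in> C then \<bar>x$j\<bar> else 0) + (\<Sum>j\<in>UNIV. if j \<in> C then 0 else \<bar>x$j\<bar>)"
      by (rule sum_split_C)
    also have "(\<Sum>j\<in>UNIV. if j \<in> C then 0 else \<bar>x$j\<bar>) = P"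
      unfolding P_def using xpos by (intro sum.cong) auto
    finally have "(\<Sum>j\<in>UNIV. \<bar>x$j\<bar>) \<le> real CARD('n) * (P * V / \<epsilon>) + P" using b1 by linarith
    also have "\<dots> = K * P" unfolding K_def by (simp add: field_simps)
    finally have sabs: "(\<Sum>j\<in>UNIV. \<bar>x$j\<bar>) \<le> K * P" .
    have "(\<Sum>j\<in>UNIV. x$j * (\<psi> \<bullet> rv v j)) = \<psi> \<bullet> (\<Sum>j\<in>UNIV. x $ j *\<^sub>R rv v j)"
      by (simp add: inner_sum_right)
    also have "\<dots> = 0" using xLR by simp
    finally have z: "(\<Sum>j\<in>UNIV. x$j * (\<psi> \<bullet> rv v j)) = 0" .
    have "(\<Sum>j\<in>UNIV. x$j * w j) = (\<Sum>j\<in>UNIV. x$j * e j) + (\<Sum>j\<in>UNIV. x$j * (\<psi> \<bullet> rv v j))"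
      unfolding e_def sum.distrib[symmetric] by (rule sum.cong) (auto simp: algebra_simps)
    also have "\<dots> = (\<Sum>j\<in>UNIV. x$j * e j)" using z by simp
    also have "\<dots> = (\<Sum>j\<in>UNIV. if j \<in> C then 0 else x$j * e j)"
      using eC by (intro sum.cong) auto
    also have "\<dots> \<ge> (\<Sum>j\<in>UNIV. if j \<in> C then 0 else x$j * \<delta>0)"
      using xpos \<delta>0le by (intro sum_mono) (auto intro: mult_left_mono)
    finally have "(\<Sum>j\<in>UNIV. x$j * w j) \<ge> \<delta>0 * P"
      unfolding P_def by (simp add: sum_distrib_left if_distrib mult.commute cong: if_cong)
    moreover have "\<delta>0 / K * (\<Sum>j\<in>UNIV. \<bar>x$j\<bar>) \<le> \<delta>0 / K * (K * P)"
      using sabs \<delta>0pos K1 by (intro mult_left_mono) auto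
    ultimately show "\<delta>0 / K * (\<Sum>j\<in>UNIV. \<bar>x$j\<bar>) \<le> (\<Sum>j\<in>UNIV. x$j * w j)"
      using K1 by simp
  qed
qed

lemma all_cells_delta:
  fixes v :: "'n::finite \<Rightarrow> int^'d::finite"
  assumes "regular_triangulation v w"
  shows "\<exists>\<delta>>0. \<forall>C\<in>cells v w. \<forall>x\<in>Ccone v C. \<delta> * (\<Sum>j\<in>UNIV. \<bar>x$j\<bar>) \<le> (\<Sum>j\<in>UNIV. x$j * w j)"
proof -
  have "\<forall>C\<in>cells v w. \<exists>\<delta>>0. \<forall>x\<in>Ccone v C. \<delta> * (\<Sum>j\<in>UNIV. \<bar>x$j\<bar>) \<le> (\<Sum>j\<in>UNIV. x$j * w j)"
    using assms cell_delta unfolding regular_triangulation_def by blast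
  then obtain D where D: "\<forall>C\<in>cells v w. D C > 0 \<and> (\<forall>x\<in>Ccone v C. D C * (\<Sum>j\<in>UNIV. \<bar>x$j\<bar>) \<le> (\<Sum>j\<in>UNIV. x$j * w j))"
    by metis
  define \<delta> where "\<delta> = Min (insert 1 (D ` cells v w))"
  have fin: "finite (insert 1 (D ` cells v w))" using cells_finite by auto
  have pos: "\<delta> > 0" unfolding \<delta>_def using D fin by (subst Min_gr_iff) auto
  show ?thesis
  proof (intro exI[of _ \<delta>] conjI pos ballI)
    fix C x assume C: "C \<in> cells v w" and x: "x \<in> Ccone v C"
    have "\<delta> \<le> D C" unfolding \<delta>_def using fin C by (intro Min_le) auto
    then have "\<delta> * (\<Sum>j\<in>UNIV. \<bar>x$j\<bar>) \<le> D C * (\<Sum>j\<in>UNIV. \<bar>x$j\<bar>)"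
      by (intro mult_right_mono) (auto intro: sum_nonneg)
    also have "\<dots> \<le> (\<Sum>j\<in>UNIV. x$j * w j)" using D C x by blast
    finally show "\<delta> * (\<Sum>j\<in>UNIV. \<bar>x$j\<bar>) \<le> (\<Sum>j\<in>UNIV. x$j * w j)" .
  qed
qed

lemma Ccone_CSigma:
  fixes v :: "'n::finite \<Rightarrow> int^'d::finite"
  assumes C: "C \<in> cells v w" and x: "x \<in> Ccone v C"
  shows "x \<in> CSigma v w"
proof -
  define f where "f C' = (if C' = C then x else 0)" for C'
  have "\<forall>C'\<in>cells v w. f C' \<in> Ccone v C'"
    using x by (auto simp: f_def Ccone_def LR_def)
  moreover have "x = (\<Sum>C'\<in>cells v w. f C')"
    unfolding f_def using C cells_finite[of v w] by (simp add: sum.delta')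
  ultimately show ?thesis unfolding CSigma_def by blast
qed

lemma inner_real_vec: "x \<bullet> (\<chi> j. t * w j) = t * (\<Sum>j\<in>UNIV. x$j * w j)"
  for x :: "real^'n::finite"
  by (simp add: inner_vec_def sum_distrib_left algebra_simps)

lemma c_dual:
  fixes v :: "'n::finite \<Rightarrow> int^'d::finite"
  assumes \<delta>: "\<delta> > 0" "\<forall>C\<in>cells v w. \<forall>x\<in>Ccone v C. \<delta> * (\<Sum>j\<in>UNIV. \<bar>x$j\<bar>) \<le> (\<Sum>j\<in>UNIV. x$j * w j)"
    and t: "t \<ge> 0"
  shows "(\<chi> j. t * w j) \<in> dualcone v w"
  unfolding dualcone_def
proof (intro CollectI ballI)
  fix x assume "x \<in> CSigma v w"
  then obtain f where f: "\<forall>C\<in>cells v w. f C \<in> Ccone v C" and x: "x = (\<Sum>C\<in>cells v w. f C)"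
    unfolding CSigma_def by blast
  have "0 \<le> (\<Sum>C\<in>cells v w. f C \<bullet> (\<chi> j. t * w j))"
  proof (intro sum_nonneg)
    fix C assume C: "C \<in> cells v w"
    have "0 \<le> \<delta> * (\<Sum>j\<in>UNIV. \<bar>f C$j\<bar>)" using \<delta> by (auto intro: sum_nonneg)
    also have "\<dots> \<le> (\<Sum>j\<in>UNIV. f C$j * w j)" using \<delta> f C by blast
    finally show "0 \<le> f C \<bullet> (\<chi> j. t * w j)" unfolding inner_real_vec using t by simp
  qed
  then show "0 \<le> x \<bullet> (\<chi> j. t * w j)" unfolding x by (simp add: inner_sum_left)
qed

lemma d0_exists:
  fixes v :: "'n::finite \<Rightarrow> int^'d::finite"
  assumes C: "C \<in> cells v w" and inj: "inj_on (rv v) C"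
  shows "\<exists>d0::real^'n. (\<Sum>j\<in>UNIV. d0$j *\<^sub>R rv v j) = 0 \<and> (\<forall>j. j \<notin> C \<longrightarrow> G \<le> d0$j)"
proof -
  have sp: "span (rv v ` C) = UNIV" using C unfolding cells_def by blast
  have "- (\<Sum>j\<in>UNIV. (if j \<in> C then 0 else G) *\<^sub>R rv v j) \<in> span (rv v ` C)" using sp by simp
  then obtain u where u: "(\<Sum>y\<in>rv v ` C. u y *\<^sub>R y) = - (\<Sum>j\<in>UNIV. (if j \<in> C then 0 else G) *\<^sub>R rv v j)"
    using span_finite[of "rv v ` C"] by auto
  have u': "(\<Sum>j\<in>C. u (rv v j) *\<^sub>R rv v j) = - (\<Sum>j\<in>UNIV. (if j \<in> C then 0 else G) *\<^sub>R rv v j)"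
    using u sum.reindex[OF inj, of "\<lambda>y. u y *\<^sub>R y"] by (simp add: comp_def)
  define d0 where "d0 = (\<chi> j. if j \<in> C then u (rv v j) else G)"
  have "(\<Sum>j\<in>UNIV. d0$j *\<^sub>R rv v j) = (\<Sum>j\<in>UNIV. (if j \<in> C then u (rv v j) else 0) *\<^sub>R rv v j) + (\<Sum>j\<in>UNIV. (if j \<in> C then 0 else G) *\<^sub>R rv v j)"
    unfolding d0_def sum.distrib[symmetric] by (rule sum.cong) auto
  also have "(\<Sum>j\<in>UNIV. (if j \<in> C then u (rv v j) else 0) *\<^sub>R rv v j) = (\<Sum>j\<in>C. u (rv v j) *\<^sub>R rv v j)"
    by (rule sum.mono_neutral_cong_right) auto
  finally have "(\<Sum>j\<in>UNIV. d0$j *\<^sub>R rv v j) = 0" using u' by simp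
  then show ?thesis by (intro exI[of _ d0]) (auto simp: d0_def)
qed

lemma Lat_real:
  fixes v :: "'n::finite \<Rightarrow> int^'d::finite"
  assumes "l \<in> Lat v"
  shows "(\<Sum>j\<in>UNIV. real_of_int (l j) *\<^sub>R rv v j) = 0"
proof -
  from assms have e: "(\<chi> i. \<Sum>j\<in>UNIV. l j * v j $ i) = (0::int^'d)" unfolding Lat_def by simp
  have z: "(\<Sum>j\<in>UNIV. l j * v j $ i) = 0" for i using arg_cong[OF e, of "\<lambda>x. x $ i"] by simp
  have z': "(\<Sum>j\<in>UNIV. real_of_int (l j) * real_of_int (v j $ i)) = 0" for i
  proof -
    have "real_of_int (\<Sum>j\<in>UNIV. l j * v j $ i) = 0" using z by simp
    then show ?thesis by simp
  qed
  show ?thesis by (simp add: vec_eq_iff rv_def ivec_def z')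
qed

lemma Lat_sum0:
  fixes v :: "'n::finite \<Rightarrow> int^'d::finite"
  assumes h: "\<forall>j. hval hh (v j) = 1" and l: "l \<in> Lat v"
  shows "(\<Sum>j\<in>UNIV. l j) = 0"
proof -
  from l have e: "(\<chi> i. \<Sum>j\<in>UNIV. l j * v j $ i) = (0::int^'d)" unfolding Lat_def by simp
  have z: "(\<Sum>j\<in>UNIV. l j * v j $ i) = 0" for i using arg_cong[OF e, of "\<lambda>x. x $ i"] by simp
  have "(\<Sum>j\<in>UNIV. l j) = (\<Sum>j\<in>UNIV. l j * hval hh (v j))" using h by simp
  also have "\<dots> = (\<Sum>j\<in>UNIV. \<Sum>i\<in>UNIV. hh$i * (l j * v j $ i))"
    unfolding hval_def by (simp add: sum_distrib_left algebra_simps)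
  also have "\<dots> = (\<Sum>i\<in>UNIV. hh$i * (\<Sum>j\<in>UNIV. l j * v j $ i))"
    by (subst sum.swap) (simp add: sum_distrib_left)
  also have "\<dots> = 0" using z by simp
  finally show ?thesis .
qed

lemma exp_ln2_pow: "exp (real k * ln 2) = (2::real)^k"
  using exp_of_nat_mult[of k "ln (2::real)"] by simp

lemma final_arith:
  fixes S n :: nat
  assumes E: "E \<le> D - t * \<delta> * real S" and t: "t * \<delta> = (real n + 2) * ln 2"
    and P: "P \<le> 2^(n*S)" "0 \<le> P" and K0: "0 \<le> K0"
  shows "K0 * exp E * 2^S * P \<le> K0 * exp D * (1/2)^S"
proof -
  have "exp E \<le> exp (D - real ((n+2)*S) * ln 2)"
  proof -
    have "t * \<delta> * real S = real ((n+2)*S) * ln 2" using t by (simp add: algebra_simps)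
    then show ?thesis using E by simp
  qed
  also have "\<dots> = exp D / 2^((n+2)*S)"
    by (simp only: exp_diff exp_ln2_pow)
  finally have e: "exp E \<le> exp D / 2^((n+2)*S)" .
  have "K0 * exp E * 2^S * P \<le> K0 * (exp D / 2^((n+2)*S)) * 2^S * 2^(n*S)"
    using e P K0 by (intro mult_mono) auto
  also have "\<dots> = K0 * exp D * (2^S * 2^(n*S) / 2^((n+2)*S))" by simp
  also have "2^S * 2^(n*S) / 2^((n+2)*S) = (1/2::real)^S"
  proof -
    have "(2::real)^((n+2)*S) = 2^S * 2^(n*S) * 2^S"
      by (simp flip: power_add add: algebra_simps)
    then show ?thesis by (simp add: power_one_over)
  qed
  finally show ?thesis .
qed

lemma tc_vanish:
  assumes "g \<in> \<int>" "real_of_int l + g < 0"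
  shows "taylor_coeff z (real_of_int l + g) 0 = 0"
proof -
  obtain k where k: "g = of_int k" using assms(1) by (auto elim: Ints_cases)
  have "l + k + 1 \<le> 0" using assms(2) k by linarith
  then have "(of_int (l + k + 1) :: complex) \<in> \<int>\<^sub>\<le>\<^sub>0" by (intro nonpos_Ints_of_int)
  moreover have "complex_of_real (real_of_int l + g) + 1 = of_int (l + k + 1)" using k by simp
  ultimately have "rGamma (complex_of_real (real_of_int l + g) + 1) = 0"
    by (metis rGamma_nonpos_Int)
  then show ?thesis unfolding taylor_coeff_def by simp
qed

lemma term_summable:
  fixes v :: "'n::finite \<Rightarrow> int^'d::finite" and z :: "'n \<Rightarrow> complex" and g :: "'n \<Rightarrow> real"
    and m :: "'n \<Rightarrow> nat" and y :: "real^'n"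
  assumes h: "\<forall>j. hval hh (v j) = 1"
    and rt: "regular_triangulation v w"
    and \<delta>: "\<delta> > 0" "\<forall>C\<in>cells v w. \<forall>x\<in>Ccone v C. \<delta> * (\<Sum>j\<in>UNIV. \<bar>x$j\<bar>) \<le> (\<Sum>j\<in>UNIV. x$j * w j)"
    and t: "t * \<delta> = (real CARD('n) + 2) * ln 2"
    and y: "y \<in> dualcone v w"
    and zy: "\<forall>j. - ln (cmod (z j)) = y$j + t * w j"
    and bw: "box_wit v w Cb q b" and gq: "\<forall>j. g j - q j \<in> \<int>"
    and m: "mono_nonzero v w b m"
  shows "(\<lambda>l. \<Prod>j\<in>UNIV. taylor_coeff (z j) (real_of_int (l j) + g j) (m j)) summable_on Lat v"
proof -
  obtain C where C: "C \<in> cells v w" and pb: "poscomb v C (ivec b)"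
    and pm: "\<forall>j. 0 < m j \<longrightarrow> poscomb v C (rv v j)" and ray: "\<forall>j. 0 < m j \<longrightarrow> isray v w j"
    using m unfolding mono_nonzero_def by blast
  have injC: "inj_on (rv v) C" using rt C unfolding regular_triangulation_def by blast
  have mC: "m j = 0" if jC: "j \<notin> C" for j
  proof (rule ccontr)
    assume "m j \<noteq> 0" then have mj: "0 < m j" by simp
    then obtain C' where C': "C' \<in> cells v w" "j \<in> C'" using ray unfolding isray_def by blast
    obtain a where a: "\<forall>i\<in>C. 0 \<le> a i" "rv v j = (\<Sum>i\<in>C. a i *\<^sub>R rv v i)"
      using pm mj unfolding poscomb_def by blast
    have s1: "(\<Sum>i\<in>UNIV. (if i = j then 1 else 0) *\<^sub>R rv v i) = (\<Sum>i\<in>UNIV. if i = j then rv v i else 0)"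
      by (rule sum.cong) auto
    have "j \<in> C"
    proof (rule cell_support[OF C C'(1), of a "\<lambda>i. if i = j then 1 else 0"])
      show "(\<Sum>j\<in>C. a j *\<^sub>R rv v j) = (\<Sum>i\<in>UNIV. (if i = j then 1 else 0) *\<^sub>R rv v i)"
        unfolding s1 using a(2) by simp
    qed (use a C'(2) in auto)
    then show False using jC by simp
  qed
  obtain q' where bw': "Cb \<in> cells v w" "\<forall>j. 0 \<le> q j \<and> q j < 1" "\<forall>j. j \<notin> Cb \<longrightarrow> q j = 0"
      "ivec b = (\<Sum>j\<in>UNIV. q j *\<^sub>R rv v j)"
    using bw unfolding box_wit_def by blast
  obtain a where a: "\<forall>i\<in>C. 0 \<le> a i" "ivec b = (\<Sum>i\<in>C. a i *\<^sub>R rv v i)"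
    using pb unfolding poscomb_def by blast
  have gC: "g j \<in> \<int>" if jC: "j \<notin> C" for j
  proof -
    have "q j = 0"
    proof (rule ccontr)
      assume "q j \<noteq> 0"
      then have "j \<in> C"
        using cell_support[OF C bw'(1), of a q j] a bw' by auto
      then show False using jC by simp
    qed
    then show ?thesis using gq by (metis diff_zero)
  qed
  have "\<forall>j. \<exists>A\<ge>0. \<forall>l::int. \<forall>z m. cmod (taylor_coeff z (real_of_int l + g j) m)
     \<le> exp ((real_of_int l + g j) * ln (cmod z) + \<bar>ln (cmod z)\<bar> + pi) * (A * 2^(nat \<bar>l\<bar>) * rho l)"
    using tc_bound by blast
  from choice[OF this] obtain A where A0: "\<And>j. A j \<ge> 0" and
    A: "\<And>j l z m. cmod (taylor_coeff z (real_of_int l + g j) m)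
     \<le> exp ((real_of_int l + g j) * ln (cmod z) + \<bar>ln (cmod z)\<bar> + pi) * (A j * 2^(nat \<bar>l\<bar>) * rho l)"
    by blast
  define G where "G = (\<Sum>j\<in>UNIV. \<bar>g j\<bar>)"
  obtain d0 where d0: "(\<Sum>j\<in>UNIV. d0$j *\<^sub>R rv v j) = 0" "\<forall>j. j \<notin> C \<longrightarrow> G \<le> d0$j"
    using d0_exists[OF C injC] by blast
  define Lz where "Lz j = ln (cmod (z j))" for j
  define K0 where "K0 = (\<Prod>j\<in>UNIV. exp (g j * Lz j + \<bar>Lz j\<bar> + pi) * A j)"
  define D where "D = d0 \<bullet> y + t * (\<delta> * (\<Sum>j\<in>UNIV. \<bar>d0$j\<bar>) + (\<Sum>j\<in>UNIV. d0$j * w j))"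
  define W where "W l = (\<Prod>j\<in>UNIV. (1/2::real)^(nat \<bar>l j\<bar>))" for l :: "'n \<Rightarrow> int"
  define T where "T l = (\<Prod>j\<in>UNIV. taylor_coeff (z j) (real_of_int (l j) + g j) (m j))" for l
  have K0: "K0 \<ge> 0" unfolding K0_def using A0 by (intro prod_nonneg) auto
  have W0: "W l \<ge> 0" for l unfolding W_def by (intro prod_nonneg) auto
  have tpos: "t \<ge> 0"
  proof -
    have "t * \<delta> > 0" using t by simp
    then show ?thesis using \<delta>(1) by (simp add: zero_less_mult_iff)
  qed
  have bound: "norm (T l) \<le> K0 * exp D * W l" if l: "l \<in> Lat v" for l
  proof (cases "\<exists>j. j \<notin> C \<and> real_of_int (l j) + g j < 0")
    case True
    then obtain j where j: "j \<notin> C" "real_of_int (l j) + g j < 0" by blast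
    have "taylor_coeff (z j) (real_of_int (l j) + g j) (m j) = 0"
      using tc_vanish[OF gC[OF j(1)] j(2)] mC[OF j(1)] by simp
    then have "T l = 0" unfolding T_def by (intro prod_zero) auto
    then show ?thesis using K0 W0 by simp
  next
    case False
    then have reg: "\<forall>j. j \<notin> C \<longrightarrow> 0 \<le> real_of_int (l j) + g j" by (auto simp: not_less)
    define S where "S = (\<Sum>j\<in>UNIV. nat \<bar>l j\<bar>)"
    have Sreal: "real S = (\<Sum>j\<in>UNIV. \<bar>real_of_int (l j)\<bar>)" unfolding S_def by simp
    define E where "E = (\<Sum>j\<in>UNIV. real_of_int (l j) * Lz j)"
    have "norm (T l) = (\<Prod>j\<in>UNIV. cmod (taylor_coeff (z j) (real_of_int (l j) + g j) (m j)))"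
      unfolding T_def by (simp add: prod_norm)
    also have "\<dots> \<le> (\<Prod>j\<in>UNIV. exp ((real_of_int (l j) + g j) * Lz j + \<bar>Lz j\<bar> + pi) * (A j * 2^(nat \<bar>l j\<bar>) * rho (l j)))"
      unfolding Lz_def by (intro prod_mono conjI A) auto
    also have "\<dots> = (\<Prod>j\<in>UNIV. (exp (g j * Lz j + \<bar>Lz j\<bar> + pi) * A j) * exp (real_of_int (l j) * Lz j) * 2^(nat \<bar>l j\<bar>) * rho (l j))"
      by (rule prod.cong) (auto simp: algebra_simps simp flip: exp_add)
    also have "\<dots> = K0 * exp E * 2^S * (\<Prod>j\<in>UNIV. rho (l j))"
      unfolding K0_def E_def S_def by (simp add: prod.distrib exp_sum power_sum)
    also have "\<dots> \<le> K0 * exp D * (1/2)^S"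
    proof (rule final_arith[OF _ t _ _ K0])
      show "(\<Prod>j\<in>UNIV. rho (l j)) \<le> 2^(CARD('n) * S)"
        unfolding S_def by (rule rho_prod) (auto intro: Lat_sum0[OF h l])
      show "0 \<le> (\<Prod>j\<in>UNIV. rho (l j))" by (intro prod_nonneg) (auto intro: rho_nonneg)
      define x where "x = (\<chi> j. real_of_int (l j) + d0$j)"
      have xLR: "(\<Sum>j\<in>UNIV. x $ j *\<^sub>R rv v j) = 0"
        unfolding x_def using Lat_real[OF l] d0(1) by (simp add: scaleR_add_left sum.distrib)
      have xpos: "0 \<le> x$j" if "j \<notin> C" for j
      proof -
        have "\<bar>g j\<bar> \<le> G" unfolding G_def by (rule member_le_sum) auto
        then show ?thesis using reg d0(2) that unfolding x_def by force
      qed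
      have xC: "x \<in> Ccone v C" unfolding Ccone_def LR_def using xLR xpos by auto
      have "0 \<le> x \<bullet> y" using y Ccone_CSigma[OF C xC] unfolding dualcone_def by blast
      also have "x \<bullet> y = (\<Sum>j\<in>UNIV. real_of_int (l j) * y$j) + d0 \<bullet> y"
        unfolding x_def inner_vec_def by (simp add: algebra_simps sum.distrib)
      finally have ly: "(\<Sum>j\<in>UNIV. real_of_int (l j) * y$j) \<ge> - (d0 \<bullet> y)" by simp
      have "\<delta> * (\<Sum>j\<in>UNIV. \<bar>x$j\<bar>) \<le> (\<Sum>j\<in>UNIV. x$j * w j)" using \<delta>(2) C xC by blast
      also have "(\<Sum>j\<in>UNIV. x$j * w j) = (\<Sum>j\<in>UNIV. real_of_int (l j) * w j) + (\<Sum>j\<in>UNIV. d0$j * w j)"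
        unfolding x_def by (simp add: algebra_simps sum.distrib)
      finally have xw: "\<delta> * (\<Sum>j\<in>UNIV. \<bar>x$j\<bar>) \<le> (\<Sum>j\<in>UNIV. real_of_int (l j) * w j) + (\<Sum>j\<in>UNIV. d0$j * w j)" .
      have "real S \<le> (\<Sum>j\<in>UNIV. \<bar>x$j\<bar>) + (\<Sum>j\<in>UNIV. \<bar>d0$j\<bar>)"
        unfolding Sreal sum.distrib[symmetric] x_def by (intro sum_mono) auto
      then have "\<delta> * real S \<le> \<delta> * ((\<Sum>j\<in>UNIV. \<bar>x$j\<bar>) + (\<Sum>j\<in>UNIV. \<bar>d0$j\<bar>))"
        using \<delta>(1) by (intro mult_left_mono) auto
      then have lw: "\<delta> * real S - \<delta> * (\<Sum>j\<in>UNIV. \<bar>d0$j\<bar>) - (\<Sum>j\<in>UNIV. d0$j * w j) \<le> (\<Sum>j\<in>UNIV. real_of_int (l j) * w j)"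
        using xw by (simp add: algebra_simps)
      have "E = - (\<Sum>j\<in>UNIV. real_of_int (l j) * y$j) - t * (\<Sum>j\<in>UNIV. real_of_int (l j) * w j)"
      proof -
        have lz: "Lz j = - (y$j + t * w j)" for j unfolding Lz_def using zy by (metis minus_minus)
        have "E = (\<Sum>j\<in>UNIV. - (real_of_int (l j) * y$j) - t * (real_of_int (l j) * w j))"
          unfolding E_def lz by (rule sum.cong) (auto simp: algebra_simps)
        then show ?thesis by (simp add: sum_subtractf sum_negf sum_distrib_left)
      qed
      also have "\<dots> \<le> d0 \<bullet> y - t * (\<delta> * real S - \<delta> * (\<Sum>j\<in>UNIV. \<bar>d0$j\<bar>) - (\<Sum>j\<in>UNIV. d0$j * w j))"
        using ly lw tpos by (smt (verit) mult_left_mono)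
      also have "\<dots> = D - t * \<delta> * real S" unfolding D_def by (simp add: algebra_simps)
      finally show "E \<le> D - t * \<delta> * real S" .
    qed
    also have "(1/2::real)^S = W l" unfolding W_def S_def by (simp add: power_sum)
    finally show ?thesis .
  qed
  have "(\<lambda>l. K0 * exp D * W l) summable_on UNIV"
    unfolding W_def by (intro summable_on_cmult_right weight_summable)
  then have "(\<lambda>l. K0 * exp D * W l) summable_on Lat v"
    by (rule summable_on_subset_banach) simp
  then have "(\<lambda>l. norm (T l)) summable_on Lat v"
    by (rule summable_on_comparison_test) (use bound in auto)
  then show ?thesis unfolding T_def by (simp add: summable_on_iff_abs_summable_on_complex)
qed

lemma summable_on_finite_sum:
  fixes f :: "'m \<Rightarrow> 'a \<Rightarrow> complex"
  assumes "finite M" "\<forall>m\<in>M. f m summable_on A"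
  shows "(\<lambda>x. \<Sum>m\<in>M. f m x) summable_on A"
  using assms
proof (induction M rule: finite_induct)
  case empty then show ?case by simp
next
  case (insert a F)
  then have "(\<lambda>x. f a x + (\<Sum>m\<in>F. f m x)) summable_on A"
    by (intro summable_on_add) auto
  then show ?case using insert by simp
qed

theorem proposition2p12:
  fixes v :: "'n::finite \<Rightarrow> int^'d::finite"
    and hh :: "int^'d" and w :: "'n \<Rightarrow> real" and \<beta> :: "int^'d"
    and \<gamma> :: "int^'d \<Rightarrow> 'n \<Rightarrow> real"
  assumes "inj v"
    and "generates v"
    and "\<forall>j. hval hh (v j) = 1"
    and "regular_triangulation v w"
    and "\<forall>b\<in>Box v w. (\<forall>j. \<gamma> b j \<in> \<rat>) \<and> (\<Sum>j\<in>UNIV. \<gamma> b j *\<^sub>R rv v j) = ivec \<beta>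
            \<and> (\<exists>C q. box_wit v w C q b \<and> (\<forall>j. \<gamma> b j - q j \<in> \<int>))"
  shows "\<exists>c\<in>dualcone v w. \<forall>z\<in>Udom v w c. \<forall>b\<in>Box v w. \<forall>u::int^'d.
           (\<lambda>l. coef v w \<gamma> z b l u) summable_on Lat v"
proof -
  obtain \<delta> where \<delta>: "\<delta> > 0" "\<forall>C\<in>cells v w. \<forall>x\<in>Ccone v C. \<delta> * (\<Sum>j\<in>UNIV. \<bar>x$j\<bar>) \<le> (\<Sum>j\<in>UNIV. x$j * w j)"
    using all_cells_delta[OF assms(4)] by blast
  define t where "t = (real CARD('n) + 2) * ln 2 / \<delta>"
  have t: "t * \<delta> = (real CARD('n) + 2) * ln 2" using \<delta>(1) by (simp add: t_def)
  have t0: "t \<ge> 0" using \<delta>(1) by (simp add: t_def)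
  define c where "c = (\<chi> j. t * w j)"
  have c: "c \<in> dualcone v w" unfolding c_def by (rule c_dual[OF \<delta> t0])
  show ?thesis
  proof (intro bexI[OF _ c] ballI allI)
    fix z b u assume z: "z \<in> Udom v w c" and b: "b \<in> Box v w"
    obtain y where y: "y \<in> dualcone v w" "\<forall>j. - ln (cmod (z j)) = y$j + c$j"
      using z unfolding Udom_def by blast
    have zy: "\<forall>j. - ln (cmod (z j)) = y$j + t * w j" using y(2) by (simp add: c_def)
    obtain Cb q where bw: "box_wit v w Cb q b" and gq: "\<forall>j. \<gamma> b j - q j \<in> \<int>"
      using assms(5) b by blast
    define M where "M = {m. mono_nonzero v w b m \<and> ivec u = ivec b + (\<Sum>j\<in>UNIV. real (m j) *\<^sub>R rv v j)}"
    have coef_eq: "coef v w \<gamma> z b l u = (\<Sum>m\<in>M. \<Prod>j\<in>UNIV. taylor_coeff (z j) (real_of_int (l j) + \<gamma> b j) (m j))" for l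
      unfolding coef_def M_def ..
    show "(\<lambda>l. coef v w \<gamma> z b l u) summable_on Lat v"
    proof (cases "finite M")
      case False then show ?thesis unfolding coef_eq by simp
    next
      case True
      have "\<forall>m\<in>M. (\<lambda>l. \<Prod>j\<in>UNIV. taylor_coeff (z j) (real_of_int (l j) + \<gamma> b j) (m j)) summable_on Lat v"
        using term_summable[OF assms(3) assms(4) \<delta> t y(1) zy bw gq] unfolding M_def by blast
      then show ?thesis unfolding coef_eq using True by (intro summable_on_finite_sum) auto
    qed
  qed
qed

end
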